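(* (Craig's and Lyndon's interpolation.) For all formulas $\phi,\psi$ of $\mathbf{PL}(\mathbin{\backslash\!\!/})$: if $\phi\models\psi$, then there is a formula $\theta$ such that $\phi\models\theta$, $\theta\models\psi$, and $\mathsf{P}^i(\theta)\subseteq\mathsf{P}^i(\phi)\cap\mathsf{P}^i(\psi)$ for each $i\in\{+,-\}$.
   Context: Fix a countably infinite set $\mathsf{Prop}$ of propositional variables. Classical formulas are generated by $\alpha ::= p \mid \bot \mid \neg\alpha \mid \alpha\wedge\alpha \mid \alpha\vee\alpha$ with $p\in\mathsf{Prop}$. Formulas of $\mathbf{PL}(\mathbin{\backslash\!\!/})$ are generated by $\phi ::= \alpha \mid \phi\wedge\phi \mid \phi\vee\phi \mid \phi\mathbin{\backslash\!\!/}\phi$ where $\alpha$ is classical. A team with domain $X\subseteq\mathsf{Prop}$ is a set $t\subseteq 2^X$ of valuations. For a team $t$ whose domain contains the variables of the formula: $t\models p$ iff $v(p)=1$ for all $v\in t$; $t\models\bot$ iff $t=\emptyset$; $t\models\neg\alpha$ iff $\{v\}\not\models\alpha$ for all $v\in t$; $t\models\phi\wedge\psi$ iff both hold; $t\models\phi\vee\psi$ iff there are $s,u\subseteq t$ with $t=s\cup u$, $s\models\phi$, $u\models\psi$; $t\models\phi\mathbin{\backslash\!\!/}\psi$ iff $t\models\phi$ or $t\models\psi$. $\phi\models\psi$ means every team satisfying $\phi$ satisfies $\psi$. Polarity: an occurrence of a propositional variable in $\phi$ is positive (negative) if it lies in the scope of an even (odd) number of negations; $\mathsf{P}^+(\phi)$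 ($\mathsf{P}^-(\phi)$) is the set of variables with a positive (negative) occurrence in $\phi$. *)

theory Defs
  imports Main
begin

text \<open>A valuation is a function nat \<Rightarrow> bool; a valuation with domain X
  is represented canonically as a function that is False outside X.\<close>

type_synonym pvar = nat
type_synonym valuation = "pvar \<Rightarrow> bool"
type_synonym team = "valuation set"

datatype cl = CVar pvar | CBot | CNeg cl | CAnd cl cl | COr cl cl

datatype fm = Cl cl | And fm fm | Or fm fm | IOr fm fm

fun cvars :: "cl \<Rightarrow> pvar set" where
  "cvars (CVar p) = {p}"
| "cvars CBot = {}"
| "cvars (CNeg a) = cvars a"
| "cvars (CAnd a b) = cvars a \<union> cvars b"
| "cvars (COr a b) = cvars a \<union> cvars b"

fun vars :: "fm \<Rightarrow> pvar set" where
  "vars (Cl a) = cvars a"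
| "vars (And f g) = vars f \<union> vars g"
| "vars (Or f g) = vars f \<union> vars g"
| "vars (IOr f g) = vars f \<union> vars g"

definition team_on :: "pvar set \<Rightarrow> team \<Rightarrow> bool" where
  "team_on X t \<longleftrightarrow> (\<forall>v\<in>t. \<forall>p. p \<notin> X \<longrightarrow> v p = False)"

fun csat :: "team \<Rightarrow> cl \<Rightarrow> bool" where
  "csat t (CVar p) \<longleftrightarrow> (\<forall>v\<in>t. v p)"
| "csat t CBot \<longleftrightarrow> t = {}"
| "csat t (CNeg a) \<longleftrightarrow> (\<forall>v\<in>t. \<not> csat {v} a)"
| "csat t (CAnd a b) \<longleftrightarrow> csat t a \<and> csat t b"
| "csat t (COr a b) \<longleftrightarrow> (\<exists>s u. s \<subseteq> t \<and> u \<subseteq> t \<and> t = s \<union> u \<and> csat s a \<and> csat u b)"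

fun sat :: "team \<Rightarrow> fm \<Rightarrow> bool" where
  "sat t (Cl a) \<longleftrightarrow> csat t a"
| "sat t (And f g) \<longleftrightarrow> sat t f \<and> sat t g"
| "sat t (Or f g) \<longleftrightarrow> (\<exists>s u. s \<subseteq> t \<and> u \<subseteq> t \<and> t = s \<union> u \<and> sat s f \<and> sat u g)"
| "sat t (IOr f g) \<longleftrightarrow> sat t f \<or> sat t g"

definition entails :: "fm \<Rightarrow> fm \<Rightarrow> bool" where
  "entails f g \<longleftrightarrow>
     (\<forall>X t. vars f \<union> vars g \<subseteq> X \<longrightarrow> team_on X t \<longrightarrow> sat t f \<longrightarrow> sat t g)"

fun cpos :: "cl \<Rightarrow> pvar set" and cneg :: "cl \<Rightarrow> pvar set" where
  "cpos (CVar p) = {p}"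
| "cpos CBot = {}"
| "cpos (CNeg a) = cneg a"
| "cpos (CAnd a b) = cpos a \<union> cpos b"
| "cpos (COr a b) = cpos a \<union> cpos b"
| "cneg (CVar p) = {}"
| "cneg CBot = {}"
| "cneg (CNeg a) = cpos a"
| "cneg (CAnd a b) = cneg a \<union> cneg b"
| "cneg (COr a b) = cneg a \<union> cneg b"

fun pos :: "fm \<Rightarrow> pvar set" where
  "pos (Cl a) = cpos a"
| "pos (And f g) = pos f \<union> pos g"
| "pos (Or f g) = pos f \<union> pos g"
| "pos (IOr f g) = pos f \<union> pos g"

fun neg :: "fm \<Rightarrow> pvar set" where
  "neg (Cl a) = cneg a"
| "neg (And f g) = neg f \<union> neg g"
| "neg (Or f g) = neg f \<union> neg g"
| "neg (IOr f g) = neg f \<union> neg g"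

end

theory Submission
  imports Defs
begin

fun nf :: "fm \<Rightarrow> cl list" where
  "nf (Cl a) = [a]"
| "nf (And f g) = concat (map (\<lambda>a. map (\<lambda>b. CAnd a b) (nf g)) (nf f))"
| "nf (Or f g) = concat (map (\<lambda>a. map (\<lambda>b. COr a b) (nf g)) (nf f))"
| "nf (IOr f g) = nf f @ nf g"

lemma nf_sat: "sat t f \<longleftrightarrow> (\<exists>a\<in>set (nf f). csat t a)"
proof (induction f arbitrary: t)
  case (And f g)
  then show ?case by auto
next
  case (Or f g)
  show ?case
  proof
    assume "sat t (Or f g)"
    then obtain s u where su: "s \<subseteq> t" "u \<subseteq> t" "t = s \<union> u" "sat s f" "sat u g" by auto
    then obtain a b where "a \<in> set (nf f)" "csat s a" "b \<in> set (nf g)" "csat u b" using Or.IH by blast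
    then have "COr a b \<in> set (nf (Or f g))" by auto
    moreover have "csat t (COr a b)" unfolding csat.simps using su \<open>csat s a\<close> \<open>csat u b\<close> by blast
    ultimately show "\<exists>c\<in>set (nf (Or f g)). csat t c" by blast
  next
    assume "\<exists>c\<in>set (nf (Or f g)). csat t c"
    then obtain a b where ab: "a \<in> set (nf f)" "b \<in> set (nf g)" "csat t (COr a b)" by auto
    then obtain s u where su: "s \<subseteq> t" "u \<subseteq> t" "t = s \<union> u" "csat s a" "csat u b" by auto
    have "sat s f" "sat u g" using Or.IH ab su by blast+
    then show "sat t (Or f g)" using su by auto
  qed
qed auto

lemma nf_pos: "a \<in> set (nf f) \<Longrightarrow> cpos a \<subseteq> pos f"
  by (induction f arbitrary: a) fastforce+
lemma nf_neg: "a \<in> set (nf f) \<Longrightarrow> cneg a \<subseteq> neg f"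
  by (induction f arbitrary: a) fastforce+
lemma nf_vars: "a \<in> set (nf f) \<Longrightarrow> cvars a \<subseteq> vars f"
  by (induction f arbitrary: a) fastforce+
lemma nf_pol: "a \<in> set (nf f) \<Longrightarrow> cpos a \<subseteq> pos f \<and> cneg a \<subseteq> neg f \<and> cvars a \<subseteq> vars f"
  using nf_pos nf_neg nf_vars by blast

lemma csat_empty: "csat {} a"
  by (induction a) auto

lemma sat_empty: "sat {} f"
  by (induction f) (auto simp: csat_empty)

lemma ev_COr: "csat {v} (COr a b) \<longleftrightarrow> csat {v} a \<or> csat {v} b"
proof
  assume "csat {v} (COr a b)"
  then obtain s u where "s \<subseteq> {v}" "u \<subseteq> {v}" "{v} = s \<union> u" "csat s a" "csat u b" by auto
  then show "csat {v} a \<or> csat {v} b"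
  proof (cases "v \<in> s")
    case True
    then have "s = {v}" using \<open>s \<subseteq> {v}\<close> by blast
    then show ?thesis using \<open>csat s a\<close> by simp
  next
    case False
    then have "u = {v}" using \<open>u \<subseteq> {v}\<close> \<open>{v} = s \<union> u\<close> by blast
    then show ?thesis using \<open>csat u b\<close> by simp
  qed
next
  assume "csat {v} a \<or> csat {v} b"
  then show "csat {v} (COr a b)"
  proof
    assume "csat {v} a"
    then have "{v} \<subseteq> {v} \<and> {} \<subseteq> {v} \<and> {v} = {v} \<union> {} \<and> csat {v} a \<and> csat {} b" using csat_empty[of b] by simp
    then show ?thesis unfolding csat.simps by blast
  next
    assume "csat {v} b"
    then have "{} \<subseteq> {v} \<and> {v} \<subseteq> {v} \<and> {v} = {} \<union> {v} \<and> csat {} a \<and> csat {v} b" using csat_empty[of a] by simp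
    then show ?thesis unfolding csat.simps by blast
  qed
qed

lemma flat: "csat t a \<longleftrightarrow> (\<forall>v\<in>t. csat {v} a)"
proof (induction a arbitrary: t)
  case (COr a b)
  show ?case
  proof
    assume "csat t (COr a b)"
    then obtain s u where "s \<subseteq> t" "u \<subseteq> t" "t = s \<union> u" "csat s a" "csat u b" by auto
    have "\<forall>v\<in>s. csat {v} a" using COr.IH(1)[of s] \<open>csat s a\<close> by blast
    moreover have "\<forall>v\<in>u. csat {v} b" using COr.IH(2)[of u] \<open>csat u b\<close> by blast
    ultimately show "\<forall>v\<in>t. csat {v} (COr a b)" using \<open>t = s \<union> u\<close> unfolding ev_COr by blast
  next
    assume H: "\<forall>v\<in>t. csat {v} (COr a b)"
    have "csat {v\<in>t. csat {v} a} a" using COr.IH(1)[of "{v\<in>t. csat {v} a}"] by blast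
    moreover have "csat {v\<in>t. csat {v} b} b" using COr.IH(2)[of "{v\<in>t. csat {v} b}"] by blast
    moreover have "t = {v\<in>t. csat {v} a} \<union> {v\<in>t. csat {v} b}" using H unfolding ev_COr by blast
    ultimately show "csat t (COr a b)" unfolding csat.simps by blast
  qed
next
  case (CAnd a b)
  show ?case unfolding csat.simps(4) using CAnd.IH(1)[of t] CAnd.IH(2)[of t] by blast
next
  case (CNeg a)
  show ?case by simp
qed simp_all

lemma mono_cl: "(\<forall>p. (u p \<and> \<not> w p \<longrightarrow> p \<notin> cpos a) \<and> (\<not> u p \<and> w p \<longrightarrow> p \<notin> cneg a))
   \<Longrightarrow> csat {u} a \<Longrightarrow> csat {w} a"
proof (induction a arbitrary: u w)
  case (CVar x)
  then show ?case by auto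
next
  case CBot
  then show ?case by simp
next
  case (CNeg a)
  have c: "\<forall>p. (w p \<and> \<not> u p \<longrightarrow> p \<notin> cpos a) \<and> (\<not> w p \<and> u p \<longrightarrow> p \<notin> cneg a)"
    using CNeg.prems(1) by simp
  have i: "csat {w} a \<Longrightarrow> csat {u} a" using CNeg.IH[of w u] c by blast
  have "\<not> csat {u} a" using CNeg.prems(2) by simp
  then have "\<not> csat {w} a" using i by blast
  then show ?case by simp
next
  case (CAnd a b)
  have ca: "\<forall>p. (u p \<and> \<not> w p \<longrightarrow> p \<notin> cpos a) \<and> (\<not> u p \<and> w p \<longrightarrow> p \<notin> cneg a)"
    using CAnd.prems(1) by simp
  have cb: "\<forall>p. (u p \<and> \<not> w p \<longrightarrow> p \<notin> cpos b) \<and> (\<not> u p \<and> w p \<longrightarrow> p \<notin> cneg b)"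
    using CAnd.prems(1) by simp
  have "csat {u} a" "csat {u} b" using CAnd.prems(2) by simp_all
  then have "csat {w} a" "csat {w} b" using CAnd.IH(1)[OF ca] CAnd.IH(2)[OF cb] by blast+
  then show ?case by simp
next
  case (COr a b)
  have ca: "\<forall>p. (u p \<and> \<not> w p \<longrightarrow> p \<notin> cpos a) \<and> (\<not> u p \<and> w p \<longrightarrow> p \<notin> cneg a)"
    using COr.prems(1) by simp
  have cb: "\<forall>p. (u p \<and> \<not> w p \<longrightarrow> p \<notin> cpos b) \<and> (\<not> u p \<and> w p \<longrightarrow> p \<notin> cneg b)"
    using COr.prems(1) by simp
  have "csat {u} a \<or> csat {u} b" using COr.prems(2) unfolding ev_COr .
  then have "csat {w} a \<or> csat {w} b" using COr.IH(1)[OF ca] COr.IH(2)[OF cb] by blast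
  then show ?case unfolding ev_COr .
qed

lemma local_cl: "\<forall>p\<in>cvars a. u p = w p \<Longrightarrow> csat {u} a = csat {w} a"
proof (induction a)
  case (COr a b)
  then show ?case unfolding ev_COr by simp
qed simp_all

lemma pol_vars: "cpos a \<subseteq> cvars a \<and> cneg a \<subseteq> cvars a"
  by (induction a) auto

lemma fin_cvars: "finite (cvars a)"
  by (induction a) auto

fun cconj :: "cl list \<Rightarrow> cl" where
  "cconj [] = CNeg CBot" | "cconj (x#xs) = CAnd x (cconj xs)"
fun cdisj :: "cl list \<Rightarrow> cl" where
  "cdisj [] = CBot" | "cdisj (x#xs) = COr x (cdisj xs)"

lemma cconj_ev: "csat {v} (cconj xs) \<longleftrightarrow> (\<forall>x\<in>set xs. csat {v} x)"
  by (induction xs) auto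
lemma cdisj_ev: "csat {v} (cdisj xs) \<longleftrightarrow> (\<exists>x\<in>set xs. csat {v} x)"
proof (induction xs)
  case (Cons x xs)
  have "csat {v} (cdisj (x#xs)) = (csat {v} x \<or> csat {v} (cdisj xs))" by (simp only: cdisj.simps ev_COr)
  then show ?case using Cons.IH by simp
qed simp
lemma cconj_pol: "cpos (cconj xs) = \<Union>(cpos ` set xs) \<and> cneg (cconj xs) = \<Union>(cneg ` set xs)"
  by (induction xs) auto
lemma cdisj_pol: "cpos (cdisj xs) = \<Union>(cpos ` set xs) \<and> cneg (cdisj xs) = \<Union>(cneg ` set xs)"
  by (induction xs) auto

definition tm :: "valuation \<Rightarrow> pvar list \<Rightarrow> pvar list \<Rightarrow> cl" where
  "tm v Pl Nl = cconj (map CVar (filter v Pl) @ map (\<lambda>p. CNeg (CVar p)) (filter (\<lambda>p. \<not> v p) Nl))"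

lemma tm_ev: "csat {w} (tm v Pl Nl) \<longleftrightarrow> (\<forall>p\<in>set Pl. v p \<longrightarrow> w p) \<and> (\<forall>p\<in>set Nl. \<not> v p \<longrightarrow> \<not> w p)"
  unfolding tm_def cconj_ev by force

lemma tm_pol: "cpos (tm v Pl Nl) \<subseteq> set Pl \<and> cneg (tm v Pl Nl) \<subseteq> set Nl"
  unfolding tm_def using cconj_pol by auto

lemma tm_fin: "finite {tm v Pl Nl | v. csat {v} a}"
proof -
  have "{tm v Pl Nl | v. csat {v} a} \<subseteq> (\<lambda>S. tm (\<lambda>p. p \<in> S) Pl Nl) ` Pow (set Pl \<union> set Nl)"
  proof
    fix x assume "x \<in> {tm v Pl Nl | v. csat {v} a}"
    then obtain v where x: "x = tm v Pl Nl" by auto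
    have h1: "filter v Pl = filter (\<lambda>p. p \<in> {p \<in> set Pl \<union> set Nl. v p}) Pl" by (rule filter_cong) auto
    have h2: "filter (\<lambda>p. \<not> v p) Nl = filter (\<lambda>p. \<not> (p \<in> {p \<in> set Pl \<union> set Nl. v p})) Nl" by (rule filter_cong) auto
    have "tm v Pl Nl = tm (\<lambda>p. p \<in> {p \<in> set Pl \<union> set Nl. v p}) Pl Nl"
      by (simp only: tm_def h1 h2)
    then show "x \<in> (\<lambda>S. tm (\<lambda>p. p \<in> S) Pl Nl) ` Pow (set Pl \<union> set Nl)" using x by blast
  qed
  then show ?thesis by (rule finite_subset) auto
qed

lemma lyndon:
  assumes H: "\<forall>v. csat {v} a \<longrightarrow> csat {v} b"
  shows "\<exists>g. (\<forall>v. csat {v} a \<longrightarrow> csat {v} g) \<and> (\<forall>v. csat {v} g \<longrightarrow> csat {v} b) \<and>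
             cpos g \<subseteq> cpos a \<inter> cpos b \<and> cneg g \<subseteq> cneg a \<inter> cneg b"
proof -
  have fa: "finite (cpos a)" by (rule finite_subset[OF conjunct1[OF pol_vars] fin_cvars])
  have fb: "finite (cneg a)" by (rule finite_subset[OF conjunct2[OF pol_vars] fin_cvars])
  have "finite (cpos a \<inter> cpos b)" using fa by simp
  then obtain Pl where Pl: "set Pl = cpos a \<inter> cpos b" using finite_list by blast
  have "finite (cneg a \<inter> cneg b)" using fb by simp
  then obtain Nl where Nl: "set Nl = cneg a \<inter> cneg b" using finite_list by blast
  obtain gl where gl: "set gl = {tm v Pl Nl | v. csat {v} a}" using finite_list[OF tm_fin[of Pl Nl a]] by blast
  define g where "g = cdisj gl"
  have 1: "csat {v} g" if "csat {v} a" for v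
  proof -
    have "tm v Pl Nl \<in> set gl" unfolding gl using that by blast
    moreover have "csat {v} (tm v Pl Nl)" by (simp add: tm_ev)
    ultimately show ?thesis unfolding g_def cdisj_ev by blast
  qed
  have 2: "csat {w} b" if wg: "csat {w} g" for w
  proof -
    obtain x where "x \<in> set gl" "csat {w} x" using wg unfolding g_def cdisj_ev by blast
    then obtain v where va: "csat {v} a" and wt: "csat {w} (tm v Pl Nl)"
      using gl by auto
    have wP: "\<forall>p\<in>set Pl. v p \<longrightarrow> w p" and wN: "\<forall>p\<in>set Nl. \<not> v p \<longrightarrow> \<not> w p"
      using wt unfolding tm_ev by blast+
    define al where "al p = ((v p \<and> \<not> w p \<and> p \<notin> cpos a) \<or> (\<not> v p \<and> w p \<and> p \<notin> cneg a))" for p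
    define v' where "v' p = (if al p then w p else v p)" for p
    have c1: "\<forall>p. (v p \<and> \<not> v' p \<longrightarrow> p \<notin> cpos a) \<and> (\<not> v p \<and> v' p \<longrightarrow> p \<notin> cneg a)"
      unfolding v'_def al_def by auto
    have "csat {v'} a" by (rule mono_cl[OF c1 va])
    define u where "u p = (if p \<in> cvars a then v' p else w p)" for p
    have "\<forall>p\<in>cvars a. u p = v' p" unfolding u_def by simp
    then have "csat {u} a" using \<open>csat {v'} a\<close> local_cl[of a u v'] by simp
    then have ub: "csat {u} b" using H by blast
    have c2: "\<forall>p. (u p \<and> \<not> w p \<longrightarrow> p \<notin> cpos b) \<and> (\<not> u p \<and> w p \<longrightarrow> p \<notin> cneg b)"
    proof (intro allI conjI impI)
      fix p assume "u p \<and> \<not> w p"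
      then have "p \<in> cvars a" "v' p" "\<not> w p" by (auto simp: u_def split: if_splits)
      then have "v p" "\<not> al p" by (auto simp: v'_def split: if_splits)
      then have "p \<in> cpos a" using \<open>\<not> w p\<close> by (auto simp: al_def)
      then show "p \<notin> cpos b" using wP \<open>v p\<close> \<open>\<not> w p\<close> Pl by blast
    next
      fix p assume "\<not> u p \<and> w p"
      then have "p \<in> cvars a" "\<not> v' p" "w p" by (auto simp: u_def split: if_splits)
      then have "\<not> v p" "\<not> al p" by (auto simp: v'_def split: if_splits)
      then have "p \<in> cneg a" using \<open>w p\<close> by (auto simp: al_def)
      then show "p \<notin> cneg b" using wN \<open>\<not> v p\<close> \<open>w p\<close> Nl by blast
    qed
    show ?thesis by (rule mono_cl[OF c2 ub])
  qed
  have gx: "cpos x \<subseteq> cpos a \<inter> cpos b \<and> cneg x \<subseteq> cneg a \<inter> cneg b" if xg: "x \<in> set gl" for x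
  proof -
    obtain v where "x = tm v Pl Nl" using xg gl by auto
    then show ?thesis using tm_pol[of v Pl Nl] Pl Nl by simp
  qed
  have 3: "cpos g \<subseteq> cpos a \<inter> cpos b \<and> cneg g \<subseteq> cneg a \<inter> cneg b"
  proof
    show "cpos g \<subseteq> cpos a \<inter> cpos b" unfolding g_def conjunct1[OF cdisj_pol] using gx by blast
    show "cneg g \<subseteq> cneg a \<inter> cneg b" unfolding g_def conjunct2[OF cdisj_pol] using gx by blast
  qed
  show ?thesis using 1 2 3 by blast
qed

fun ior :: "cl list \<Rightarrow> fm" where
  "ior [] = Cl CBot" | "ior (x#xs) = IOr (Cl x) (ior xs)"

lemma ior_sat: "sat t (ior xs) \<longleftrightarrow> (\<exists>x\<in>set xs. csat t x) \<or> t = {}"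
  by (induction xs) auto

lemma ior_pol: "pos (ior xs) = \<Union>(cpos ` set xs) \<and> neg (ior xs) = \<Union>(cneg ` set xs)"
  by (induction xs) auto

lemma getb:
  assumes E: "entails \<phi> \<psi>" and a: "a \<in> set (nf \<phi>)"
  shows "\<exists>b\<in>set (nf \<psi>). \<forall>v. csat {v} a \<longrightarrow> csat {v} b"
proof -
  define X where "X = vars \<phi> \<union> vars \<psi>"
  define r where "r v = (\<lambda>p. if p \<in> X then v p else False)" for v :: valuation
  define T where "T = {v. team_on X {v} \<and> csat {v} a}"
  have "team_on X T" unfolding T_def team_on_def by auto
  moreover have "csat T a" unfolding T_def by (subst flat) auto
  then have "sat T \<phi>" using a nf_sat by blast
  ultimately have "sat T \<psi>" using E unfolding entails_def X_def by blast
  then obtain b where b: "b \<in> set (nf \<psi>)" "csat T b" using nf_sat by blast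
  have "csat {v} b" if "csat {v} a" for v
  proof -
    have ra: "cvars a \<subseteq> X" using nf_pol[OF a] X_def by auto
    have rb: "cvars b \<subseteq> X" using nf_pol[OF b(1)] X_def by auto
    have "\<forall>p\<in>cvars a. v p = r v p" using ra by (auto simp: r_def)
    then have "csat {r v} a" using that local_cl[of a v "r v"] by simp
    moreover have "team_on X {r v}" by (auto simp: team_on_def r_def)
    ultimately have "r v \<in> T" unfolding T_def by auto
    then have "csat {r v} b" using b(2) flat by blast
    moreover have "\<forall>p\<in>cvars b. v p = r v p" using rb by (auto simp: r_def)
    ultimately show ?thesis using local_cl[of b v "r v"] by simp
  qed
  then show ?thesis using b(1) by blast
qed

theorem corollary8p2:
  fixes \<phi> \<psi> :: fm
  assumes "entails \<phi> \<psi>"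
  shows "\<exists>\<theta>. entails \<phi> \<theta> \<and> entails \<theta> \<psi> \<and>
           pos \<theta> \<subseteq> pos \<phi> \<inter> pos \<psi> \<and> neg \<theta> \<subseteq> neg \<phi> \<inter> neg \<psi>"
proof -
  have ex: "\<forall>a\<in>set (nf \<phi>). \<exists>gb. snd gb \<in> set (nf \<psi>) \<and> (\<forall>v. csat {v} a \<longrightarrow> csat {v} (fst gb)) \<and> (\<forall>v. csat {v} (fst gb) \<longrightarrow> csat {v} (snd gb)) \<and>
             cpos (fst gb) \<subseteq> cpos a \<inter> cpos (snd gb) \<and> cneg (fst gb) \<subseteq> cneg a \<inter> cneg (snd gb)"
  proof
    fix a assume a: "a \<in> set (nf \<phi>)"
    obtain b where b: "b \<in> set (nf \<psi>)" "\<forall>v. csat {v} a \<longrightarrow> csat {v} b" using getb[OF assms a] by blast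
    obtain g where g: "(\<forall>v. csat {v} a \<longrightarrow> csat {v} g) \<and> (\<forall>v. csat {v} g \<longrightarrow> csat {v} b) \<and>
             cpos g \<subseteq> cpos a \<inter> cpos b \<and> cneg g \<subseteq> cneg a \<inter> cneg b" using lyndon[OF b(2)] by blast
    show "\<exists>gb. snd gb \<in> set (nf \<psi>) \<and> (\<forall>v. csat {v} a \<longrightarrow> csat {v} (fst gb)) \<and> (\<forall>v. csat {v} (fst gb) \<longrightarrow> csat {v} (snd gb)) \<and>
             cpos (fst gb) \<subseteq> cpos a \<inter> cpos (snd gb) \<and> cneg (fst gb) \<subseteq> cneg a \<inter> cneg (snd gb)"
      using b(1) g by (intro exI[of _ "(g, b)"]) simp
  qed
  then obtain F where F: "\<forall>a\<in>set (nf \<phi>). snd (F a) \<in> set (nf \<psi>) \<and> (\<forall>v. csat {v} a \<longrightarrow> csat {v} (fst (F a))) \<and> (\<forall>v. csat {v} (fst (F a)) \<longrightarrow> csat {v} (snd (F a))) \<and>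
             cpos (fst (F a)) \<subseteq> cpos a \<inter> cpos (snd (F a)) \<and> cneg (fst (F a)) \<subseteq> cneg a \<inter> cneg (snd (F a))"
    using bchoice[OF ex] by blast
  define G where "G a = fst (F a)" for a
  define B where "B a = snd (F a)" for a
  have GB: "B a \<in> set (nf \<psi>) \<and> (\<forall>v. csat {v} a \<longrightarrow> csat {v} (G a)) \<and> (\<forall>v. csat {v} (G a) \<longrightarrow> csat {v} (B a)) \<and>
             cpos (G a) \<subseteq> cpos a \<inter> cpos (B a) \<and> cneg (G a) \<subseteq> cneg a \<inter> cneg (B a)" if "a \<in> set (nf \<phi>)" for a
    unfolding G_def B_def by (rule bspec[OF F that])
  define \<theta> where "\<theta> = ior (map G (nf \<phi>))"
  have e1: "entails \<phi> \<theta>"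
    unfolding entails_def
  proof (intro allI impI)
    fix X t assume "sat t \<phi>"
    then obtain a where a: "a \<in> set (nf \<phi>)" "csat t a" using nf_sat by blast
    have "\<forall>v\<in>t. csat {v} a" using a(2) flat[of t a] by blast
    then have "\<forall>v\<in>t. csat {v} (G a)" using GB[OF a(1)] by blast
    then have "csat t (G a)" using flat[of t "G a"] by blast
    then show "sat t \<theta>" unfolding \<theta>_def ior_sat using a(1) by auto
  qed
  have e2: "entails \<theta> \<psi>"
    unfolding entails_def
  proof (intro allI impI)
    fix X t assume "sat t \<theta>"
    then have "(\<exists>a\<in>set (nf \<phi>). csat t (G a)) \<or> t = {}" unfolding \<theta>_def ior_sat by auto
    then show "sat t \<psi>"
    proof
      assume "\<exists>a\<in>set (nf \<phi>). csat t (G a)"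
      then obtain a where a: "a \<in> set (nf \<phi>)" "csat t (G a)" by blast
      have "\<forall>v\<in>t. csat {v} (G a)" using a(2) flat[of t "G a"] by blast
      then have "\<forall>v\<in>t. csat {v} (B a)" using GB[OF a(1)] by blast
      then have "csat t (B a)" using flat[of t "B a"] by blast
      then show ?thesis using GB[OF a(1)] nf_sat[of t \<psi>] by blast
    qed (simp add: sat_empty)
  qed
  have p: "pos \<theta> \<subseteq> pos \<phi> \<inter> pos \<psi> \<and> neg \<theta> \<subseteq> neg \<phi> \<inter> neg \<psi>"
  proof -
    have h: "cpos (G a) \<subseteq> pos \<phi> \<inter> pos \<psi> \<and> cneg (G a) \<subseteq> neg \<phi> \<inter> neg \<psi>" if a: "a \<in> set (nf \<phi>)" for a
    proof -
      have g: "B a \<in> set (nf \<psi>)" "cpos (G a) \<subseteq> cpos a \<inter> cpos (B a)" "cneg (G a) \<subseteq> cneg a \<inter> cneg (B a)"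
        using GB[OF a] by blast+
      show ?thesis using g nf_pol[OF a] nf_pol[OF g(1)] by blast
    qed
    have "pos \<theta> \<subseteq> pos \<phi> \<inter> pos \<psi>" unfolding \<theta>_def conjunct1[OF ior_pol] using h by fastforce
    moreover have "neg \<theta> \<subseteq> neg \<phi> \<inter> neg \<psi>" unfolding \<theta>_def conjunct2[OF ior_pol] using h by fastforce
    ultimately show ?thesis by blast
  qed
  show ?thesis using e1 e2 p by blast
qed

end
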